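(* Let $G$ be a nice graph of order $n$, size $m$ and maximum degree $\Delta$. Then ${\rm ME}^{\rm W}(G) \leq {\rm ML}^{\rm W}(G) \leq m \cdot {\rm ME}^{\rm W}(G)$, ${\rm MV}^{\rm W}(G) \leq {\rm ML}^{\rm W}(G) \leq \frac{n}{2}\cdot {\rm MV}^{\rm W}(G)$, and ${\rm ME}^{\rm W}(G) \leq {\rm MV}^{\rm W}(G) \leq \Delta \cdot {\rm ME}^{\rm W}(G)$.
   Context: All graphs are finite and simple. A walk of a graph $G$ is a sequence of vertices $u_0u_1\dots u_p$ with $u_tu_{t+1}\in E(G)$ for all $t$ (vertices and edges may repeat); its length is $p$. For a walk $W$ of $G$, $G+W$ is the multigraph on $V(G)$ whose edge multiset consists of $E(G)$ together with each edge $e$ added as many times as $W$ traverses $e$. A multigraph is locally irregular if no two adjacent vertices have the same degree; $W$ is irregularising if $G+W$ is locally irregular. A graph is nice if it is connected and not isomorphic to $K_2$. ${\rm ML}^{\rm W}(G)$ is the minimum length of an irregularising walk of $G$; ${\rm ME}^{\rm W}(G)$ is the minimum, over irregularising walks $W$ of $G$, of the maximum number of times $W$ traverses an edge; ${\rm MV}^{\rm W}(G)$ is the minimum, over irregularising walks $W$ of $G$, of the maximum over vertices $v$ of the number of edges of $W$ (counted with multiplicity) incident to $v$. *)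

theory Defs
  imports Complex_Main
begin

definition simple_graph :: "'a set \<Rightarrow> 'a set set \<Rightarrow> bool" where
  "simple_graph V E \<longleftrightarrow> finite V \<and> (\<forall>e\<in>E. e \<subseteq> V \<and> card e = 2)"

definition is_walk :: "'a set \<Rightarrow> 'a set set \<Rightarrow> 'a list \<Rightarrow> bool" where
  "is_walk V E ws \<longleftrightarrow> ws \<noteq> [] \<and> set ws \<subseteq> V \<and>
     (\<forall>i. Suc i < length ws \<longrightarrow> {ws ! i, ws ! Suc i} \<in> E)"

definition walk_len :: "'a list \<Rightarrow> nat" where
  "walk_len ws = length ws - 1"

definition edge_mult :: "'a list \<Rightarrow> 'a set \<Rightarrow> nat" where
  "edge_mult ws e = card {i. Suc i < length ws \<and> {ws ! i, ws ! Suc i} = e}"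

definition vert_load :: "'a list \<Rightarrow> 'a \<Rightarrow> nat" where
  "vert_load ws v = card {i. Suc i < length ws \<and> v \<in> {ws ! i, ws ! Suc i}}"

definition degree :: "'a set set \<Rightarrow> 'a \<Rightarrow> nat" where
  "degree E v = card {e\<in>E. v \<in> e}"

definition max_degree :: "'a set \<Rightarrow> 'a set set \<Rightarrow> nat" where
  "max_degree V E = Max (degree E ` V)"

text \<open>Degree of v in the multigraph G + W.\<close>
definition walk_degree :: "'a set set \<Rightarrow> 'a list \<Rightarrow> 'a \<Rightarrow> nat" where
  "walk_degree E ws v = degree E v + vert_load ws v"

definition irregularising :: "'a set \<Rightarrow> 'a set set \<Rightarrow> 'a list \<Rightarrow> bool" where
  "irregularising V E ws \<longleftrightarrow> is_walk V E ws \<and>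
     (\<forall>u v. {u, v} \<in> E \<longrightarrow> walk_degree E ws u \<noteq> walk_degree E ws v)"

definition connected_graph :: "'a set \<Rightarrow> 'a set set \<Rightarrow> bool" where
  "connected_graph V E \<longleftrightarrow> V \<noteq> {} \<and>
     (\<forall>u\<in>V. \<forall>v\<in>V. \<exists>ws. is_walk V E ws \<and> hd ws = u \<and> last ws = v)"

definition is_K2 :: "'a set \<Rightarrow> 'a set set \<Rightarrow> bool" where
  "is_K2 V E \<longleftrightarrow> card V = 2 \<and> E = {V}"

definition nice :: "'a set \<Rightarrow> 'a set set \<Rightarrow> bool" where
  "nice V E \<longleftrightarrow> simple_graph V E \<and> connected_graph V E \<and> \<not> is_K2 V E"

definition min_len_W :: "'a set \<Rightarrow> 'a set set \<Rightarrow> nat" where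
  "min_len_W V E = (LEAST k. \<exists>ws. irregularising V E ws \<and> walk_len ws = k)"

definition min_edge_W :: "'a set \<Rightarrow> 'a set set \<Rightarrow> nat" where
  "min_edge_W V E = (LEAST k. \<exists>ws. irregularising V E ws \<and>
      Max (insert 0 (edge_mult ws ` E)) = k)"

definition min_vert_W :: "'a set \<Rightarrow> 'a set set \<Rightarrow> nat" where
  "min_vert_W V E = (LEAST k. \<exists>ws. irregularising V E ws \<and>
      Max (insert 0 (vert_load ws ` V)) = k)"

end

theory Submission
  imports Defs
begin

lemma fiber_card:
  assumes "finite A" "finite E" "\<forall>i\<in>A. f i \<in> E"
  shows "card A = (\<Sum>e\<in>E. card {i\<in>A. f i = e})"
proof -
  have "A = (\<Union>e\<in>E. {i\<in>A. f i = e})" using assms by auto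
  hence "card A = card (\<Union>e\<in>E. {i\<in>A. f i = e})" by simp
  also have "\<dots> = (\<Sum>e\<in>E. card {i\<in>A. f i = e})"
    by (rule card_UN_disjoint) (use assms in auto)
  finally show ?thesis .
qed

lemma double_count:
  assumes "finite A" "finite V"
  shows "(\<Sum>v\<in>V. card {i\<in>A. P i v}) = (\<Sum>i\<in>A. card {v\<in>V. P i v})"
proof -
  have "(\<Sum>v\<in>V. card {i\<in>A. P i v}) = (\<Sum>v\<in>V. \<Sum>i\<in>A. if P i v then 1 else 0)"
    using assms by (simp add: sum.inter_filter[symmetric])
  also have "\<dots> = (\<Sum>i\<in>A. \<Sum>v\<in>V. if P i v then 1 else 0)" by (rule sum.swap)
  also have "\<dots> = (\<Sum>i\<in>A. card {v\<in>V. P i v})"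
    using assms by (simp add: sum.inter_filter[symmetric])
  finally show ?thesis .
qed

lemma idx_eq: "{i. Suc i < length ws} = {..< walk_len ws}"
  unfolding walk_len_def by auto

lemma fin_idx[simp]: "finite {i. Suc i < length ws}" "finite {i. Suc i < length ws \<and> P i}"
  by (rule finite_subset[of _ "{..<length ws}"]; auto)+

lemma sum_edge:
  assumes "is_walk V E ws" "finite E"
  shows "walk_len ws = (\<Sum>e\<in>E. edge_mult ws e)"
proof -
  have "card {i. Suc i < length ws} = (\<Sum>e\<in>E. card {i\<in>{i. Suc i < length ws}. {ws ! i, ws ! Suc i} = e})"
    by (rule fiber_card) (use assms in \<open>auto simp: is_walk_def\<close>)
  moreover have "card {i. Suc i < length ws} = walk_len ws" by (simp add: idx_eq)
  ultimately show ?thesis unfolding edge_mult_def by simp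
qed

lemma sum_vert:
  assumes "simple_graph V E" "is_walk V E ws"
  shows "2 * walk_len ws = (\<Sum>v\<in>V. vert_load ws v)"
proof -
  let ?A = "{i. Suc i < length ws}"
  have fV: "finite V" using assms by (simp add: simple_graph_def)
  have "(\<Sum>v\<in>V. vert_load ws v) = (\<Sum>v\<in>V. card {i\<in>?A. v \<in> {ws ! i, ws ! Suc i}})"
    unfolding vert_load_def by simp
  also have "\<dots> = (\<Sum>i\<in>?A. card {v\<in>V. v \<in> {ws ! i, ws ! Suc i}})"
    by (rule double_count) (use fV in \<open>auto simp: idx_eq\<close>)
  also have "\<dots> = (\<Sum>i\<in>?A. 2)"
  proof (rule sum.cong)
    fix i assume "i \<in> ?A"
    hence "{ws ! i, ws ! Suc i} \<in> E" using assms(2) by (auto simp: is_walk_def)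
    hence "{ws ! i, ws ! Suc i} \<subseteq> V" "card {ws ! i, ws ! Suc i} = 2"
      using assms(1) by (auto simp: simple_graph_def)
    moreover have "{v\<in>V. v \<in> {ws ! i, ws ! Suc i}} = {ws ! i, ws ! Suc i}" using calculation by auto
    ultimately show "card {v\<in>V. v \<in> {ws ! i, ws ! Suc i}} = 2" by simp
  qed simp
  also have "\<dots> = 2 * walk_len ws" by (simp add: idx_eq)
  finally show ?thesis by simp
qed

lemma edge_le_len: "edge_mult ws e \<le> walk_len ws"
proof -
  have "edge_mult ws e \<le> card {i. Suc i < length ws}"
    unfolding edge_mult_def by (rule card_mono) auto
  thus ?thesis by (simp add: idx_eq)
qed

lemma vert_le_len: "vert_load ws v \<le> walk_len ws"
proof -
  have "vert_load ws v \<le> card {i. Suc i < length ws}"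
    unfolding vert_load_def by (rule card_mono) auto
  thus ?thesis by (simp add: idx_eq)
qed

lemma edge_le_vert: "v \<in> e \<Longrightarrow> edge_mult ws e \<le> vert_load ws v"
  unfolding edge_mult_def vert_load_def
  by (rule card_mono) auto

lemma finE: "simple_graph V E \<Longrightarrow> finite E"
  unfolding simple_graph_def
  by (metis Pow_iff finite_Pow_iff rev_finite_subset subsetI)

lemma maxE_ge: "finite E \<Longrightarrow> e \<in> E \<Longrightarrow> edge_mult ws e \<le> Max (insert 0 (edge_mult ws ` E))"
  by (rule Max_ge) auto

lemma vert_le_deg:
  assumes "is_walk V E ws" "finite E"
  shows "vert_load ws v \<le> degree E v * Max (insert 0 (edge_mult ws ` E))"
proof -
  let ?A = "{i. Suc i < length ws \<and> v \<in> {ws ! i, ws ! Suc i}}"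
  let ?E' = "{e\<in>E. v \<in> e}"
  have "card ?A = (\<Sum>e\<in>?E'. card {i\<in>?A. {ws ! i, ws ! Suc i} = e})"
    by (rule fiber_card) (use assms in \<open>auto simp: is_walk_def idx_eq\<close>)
  also have "\<dots> = (\<Sum>e\<in>?E'. edge_mult ws e)"
    unfolding edge_mult_def by (rule sum.cong) (auto intro!: arg_cong[where f=card])
  also have "\<dots> \<le> (\<Sum>e\<in>?E'. Max (insert 0 (edge_mult ws ` E)))"
    by (rule sum_mono) (use assms in \<open>auto intro: maxE_ge\<close>)
  also have "\<dots> = degree E v * Max (insert 0 (edge_mult ws ` E))"
    by (simp add: degree_def)
  finally show ?thesis unfolding vert_load_def .
qed

lemma mE_le_len: "finite E \<Longrightarrow> Max (insert 0 (edge_mult ws ` E)) \<le> walk_len ws"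
  by (auto intro!: Max.boundedI simp: edge_le_len)

lemma mV_le_len: "finite V \<Longrightarrow> Max (insert 0 (vert_load ws ` V)) \<le> walk_len ws"
  by (auto intro!: Max.boundedI simp: vert_le_len)

lemma mE_le_mV:
  assumes "simple_graph V E"
  shows "Max (insert 0 (edge_mult ws ` E)) \<le> Max (insert 0 (vert_load ws ` V))"
proof (rule Max.boundedI)
  show "finite (insert 0 (edge_mult ws ` E))" using finE[OF assms] by simp
  have fV: "finite V" using assms by (simp add: simple_graph_def)
  fix a assume "a \<in> insert 0 (edge_mult ws ` E)"
  then consider "a = 0" | e where "e \<in> E" "a = edge_mult ws e" by auto
  thus "a \<le> Max (insert 0 (vert_load ws ` V))"
  proof cases
    case 1 thus ?thesis by simp
  next
    case 2
    have "card e = 2" "e \<subseteq> V" using assms 2 by (auto simp: simple_graph_def)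
    then obtain v where v: "v \<in> e" "v \<in> V" by (metis card.empty ex_in_conv subsetD zero_neq_numeral)
    have "a \<le> vert_load ws v" using 2 v by (simp add: edge_le_vert)
    also have "\<dots> \<le> Max (insert 0 (vert_load ws ` V))" using fV v by (intro Max_ge) auto
    finally show ?thesis .
  qed
qed simp

lemma mV_le_deg:
  assumes "simple_graph V E" "is_walk V E ws"
  shows "Max (insert 0 (vert_load ws ` V)) \<le> max_degree V E * Max (insert 0 (edge_mult ws ` E))"
proof (rule Max.boundedI)
  have fV: "finite V" using assms by (simp add: simple_graph_def)
  show "finite (insert 0 (vert_load ws ` V))" using fV by simp
  fix a assume "a \<in> insert 0 (vert_load ws ` V)"
  then consider "a = 0" | v where "v \<in> V" "a = vert_load ws v" by auto
  thus "a \<le> max_degree V E * Max (insert 0 (edge_mult ws ` E))"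
  proof cases
    case 1 thus ?thesis by simp
  next
    case 2
    have "a \<le> degree E v * Max (insert 0 (edge_mult ws ` E))"
      using vert_le_deg[OF assms(2) finE[OF assms(1)]] 2 by simp
    also have "\<dots> \<le> max_degree V E * Max (insert 0 (edge_mult ws ` E))"
      unfolding max_degree_def using fV 2 finE[OF assms(1)] by (intro mult_right_mono Max_ge) auto
    finally show ?thesis .
  qed
qed simp

lemma len_le_E:
  assumes "simple_graph V E" "is_walk V E ws"
  shows "walk_len ws \<le> card E * Max (insert 0 (edge_mult ws ` E))"
proof -
  have fE: "finite E" using finE[OF assms(1)] .
  have "walk_len ws = (\<Sum>e\<in>E. edge_mult ws e)" using sum_edge[OF assms(2) fE] .
  also have "\<dots> \<le> (\<Sum>e\<in>E. Max (insert 0 (edge_mult ws ` E)))"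
    by (rule sum_mono) (use fE in \<open>auto intro: maxE_ge\<close>)
  finally show ?thesis by simp
qed

lemma len_le_V:
  assumes "simple_graph V E" "is_walk V E ws"
  shows "2 * walk_len ws \<le> card V * Max (insert 0 (vert_load ws ` V))"
proof -
  have fV: "finite V" using assms by (simp add: simple_graph_def)
  have "2 * walk_len ws = (\<Sum>v\<in>V. vert_load ws v)" using sum_vert[OF assms] .
  also have "\<dots> \<le> (\<Sum>v\<in>V. Max (insert 0 (vert_load ws ` V)))"
    by (rule sum_mono) (use fV in \<open>auto intro: Max_ge\<close>)
  finally show ?thesis by simp
qed


lemma no_walk_facts:
  assumes "nice V E" "\<not> (\<exists>ws. irregularising V E ws)"
  shows "card V \<ge> 2 \<and> card E \<ge> 1 \<and> max_degree V E \<ge> 1"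
proof -
  have sg: "simple_graph V E" and cg: "connected_graph V E" using assms(1) by (auto simp: nice_def)
  have fV: "finite V" using sg by (simp add: simple_graph_def)
  have fE: "finite E" using finE[OF sg] .
  have ne: "V \<noteq> {}" using cg by (simp add: connected_graph_def)
  have c2: "card V \<ge> 2"
  proof (rule ccontr)
    assume "\<not> card V \<ge> 2"
    moreover have "card V > 0" using ne fV by (simp add: card_gt_0_iff)
    ultimately have "card V = 1" by linarith
    then obtain v where V: "V = {v}" by (auto simp: card_Suc_eq)
    have E: "E = {}"
    proof (rule ccontr)
      assume "E \<noteq> {}"
      then obtain e where "e \<in> E" by auto
      hence "e \<subseteq> {v}" "card e = 2" using sg V by (auto simp: simple_graph_def)
      hence "card e \<le> 1" using card_mono[of "{v}" e] by simp
      thus False using \<open>card e = 2\<close> by simp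
    qed
    have "irregularising V E [v]" by (simp add: irregularising_def is_walk_def V E)
    thus False using assms(2) by blast
  qed
  hence "\<not> card V \<le> Suc 0" by simp
  then obtain u v where uv: "u \<in> V" "v \<in> V" "u \<noteq> v"
    using card_le_Suc0_iff_eq[OF fV] by blast
  then obtain ws where ws: "is_walk V E ws" "hd ws = u" "last ws = v"
    using cg by (auto simp: connected_graph_def)
  have "length ws \<ge> 2"
  proof (rule ccontr)
    assume "\<not> length ws \<ge> 2"
    moreover have "ws \<noteq> []" using ws by (simp add: is_walk_def)
    ultimately have "length ws = 1" by (cases ws) (auto simp: Suc_le_eq)
    then obtain x where "ws = [x]" by (auto simp: length_Suc_conv)
    thus False using ws uv by simp
  qed
  hence e: "{ws ! 0, ws ! Suc 0} \<in> E" using ws by (auto simp: is_walk_def)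
  have w0: "ws ! 0 \<in> V" using ws \<open>length ws \<ge> 2\<close> by (auto simp: is_walk_def)
  have "card E > 0" using e fE by (auto simp: card_gt_0_iff)
  hence "card E \<ge> 1" by simp
  moreover have "degree E (ws ! 0) \<ge> 1"
  proof -
    have "{ws ! 0, ws ! Suc 0} \<in> {e\<in>E. ws ! 0 \<in> e}" using e by simp
    moreover have "finite {e\<in>E. ws ! 0 \<in> e}" using fE by simp
    ultimately have "card {e\<in>E. ws ! 0 \<in> e} > 0" by (auto simp: card_gt_0_iff)
    thus ?thesis unfolding degree_def by simp
  qed
  moreover have "degree E (ws ! 0) \<le> max_degree V E"
    unfolding max_degree_def using fV w0 by (intro Max_ge) auto
  ultimately show ?thesis using c2 by simp
qed

theorem mainTheorem1:
  fixes V :: "'a set" and E :: "'a set set"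
  assumes "nice V E"
  shows "min_edge_W V E \<le> min_len_W V E \<and> min_len_W V E \<le> card E * min_edge_W V E
    \<and> min_vert_W V E \<le> min_len_W V E
    \<and> real (min_len_W V E) \<le> real (card V) / 2 * real (min_vert_W V E)
    \<and> min_edge_W V E \<le> min_vert_W V E \<and> min_vert_W V E \<le> max_degree V E * min_edge_W V E"
proof (cases "\<exists>ws. irregularising V E ws")
  case False
  have h: "card V \<ge> 2 \<and> card E \<ge> 1 \<and> max_degree V E \<ge> 1" using no_walk_facts[OF assms False] .
  define c where "c = (LEAST k::nat. False)"
  have L: "min_len_W V E = c" "min_edge_W V E = c" "min_vert_W V E = c"
    unfolding c_def min_len_W_def min_edge_W_def min_vert_W_def using False by simp_all
  have r: "real c \<le> real (card V) / 2 * real c"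
  proof -
    have "real (card V) / 2 \<ge> 1" using h by simp
    thus ?thesis using mult_right_mono[of 1 "real (card V) / 2" "real c"] by simp
  qed
  show ?thesis unfolding L using h r by simp
next
  case True
  have sg: "simple_graph V E" using assms by (simp add: nice_def)
  have fV: "finite V" using sg by (simp add: simple_graph_def)
  have wk: "\<And>ws. irregularising V E ws \<Longrightarrow> is_walk V E ws" by (simp add: irregularising_def)
  from True obtain w0 where w0: "irregularising V E w0" by blast
  obtain wL where wL: "irregularising V E wL" "walk_len wL = min_len_W V E"
    unfolding min_len_W_def using LeastI_ex[of "\<lambda>k. \<exists>ws. irregularising V E ws \<and> walk_len ws = k"] w0 by blast
  obtain wE where wE: "irregularising V E wE" "Max (insert 0 (edge_mult wE ` E)) = min_edge_W V E"
    unfolding min_edge_W_def using LeastI_ex[of "\<lambda>k. \<exists>ws. irregularising V E ws \<and> Max (insert 0 (edge_mult ws ` E)) = k"] w0 by blast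
  obtain wV where wV: "irregularising V E wV" "Max (insert 0 (vert_load wV ` V)) = min_vert_W V E"
    unfolding min_vert_W_def using LeastI_ex[of "\<lambda>k. \<exists>ws. irregularising V E ws \<and> Max (insert 0 (vert_load ws ` V)) = k"] w0 by blast
  have LL: "\<And>ws. irregularising V E ws \<Longrightarrow> min_len_W V E \<le> walk_len ws"
    unfolding min_len_W_def by (rule Least_le) blast
  have LE: "\<And>ws. irregularising V E ws \<Longrightarrow> min_edge_W V E \<le> Max (insert 0 (edge_mult ws ` E))"
    unfolding min_edge_W_def by (rule Least_le) blast
  have LV: "\<And>ws. irregularising V E ws \<Longrightarrow> min_vert_W V E \<le> Max (insert 0 (vert_load ws ` V))"
    unfolding min_vert_W_def by (rule Least_le) blast
  have 1: "min_edge_W V E \<le> min_len_W V E"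
    using LE[OF wL(1)] mE_le_len[OF finE[OF sg], of wL] wL(2) by simp
  have 2: "min_len_W V E \<le> card E * min_edge_W V E"
    using LL[OF wE(1)] len_le_E[OF sg wk[OF wE(1)]] wE(2) by simp
  have 3: "min_vert_W V E \<le> min_len_W V E"
    using LV[OF wL(1)] mV_le_len[OF fV, of wL] wL(2) by simp
  have "2 * min_len_W V E \<le> card V * min_vert_W V E"
    using LL[OF wV(1)] len_le_V[OF sg wk[OF wV(1)]] wV(2) by simp
  hence "real (2 * min_len_W V E) \<le> real (card V * min_vert_W V E)" by (simp only: of_nat_le_iff)
  hence 4: "real (min_len_W V E) \<le> real (card V) / 2 * real (min_vert_W V E)" by simp
  have 5: "min_edge_W V E \<le> min_vert_W V E"
    using LE[OF wV(1)] mE_le_mV[OF sg, of wV] wV(2) by simp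
  have 6: "min_vert_W V E \<le> max_degree V E * min_edge_W V E"
    using LV[OF wE(1)] mV_le_deg[OF sg wk[OF wE(1)]] wE(2) by simp
  show ?thesis using 1 2 3 4 5 6 by blast
qed

end
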